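(* Define $\phi:\mathrm{PSL}(2,\mathbb{Z})\to\mathbb{C}$ by $\phi(\gamma)=(\mathcal{R}(\gamma;z_q)+2\lambda^2)\,f(\gamma z_q)$, where $f(w)=\frac{i(w-z_q)}{w-\overline{z_q}}$. Then every point in the image of $\phi$ has exactly $|\mathrm{Stab}_{\mathrm{PSL}(2,\mathbb{Z})}(z_q)|$ preimages, and this number equals $\frac12|\mathcal{O}_K^\times|$.
   Context: Let $q\in\{3,4,7,8,11,19,43,67,163\}$, $K$ the imaginary quadratic field of discriminant $-q$ (class number one), $\mathcal{O}_K$ its ring of integers, $\mathcal{O}_K^\times$ its unit group. Let $z_q=\mu+i\lambda$ with $\mu=0$ if $q\in\{4,8\}$, $\mu=1/2$ otherwise, $\lambda=\sqrt{q}/2$. $\mathbb{H}$ is the upper half-plane with hyperbolic distance $\rho$, $\cosh\rho(z,w)=1+\frac{|z-w|^2}{2\,\mathrm{Im}(z)\mathrm{Im}(w)}$, and $\mathrm{PSL}(2,\mathbb{Z})$ acts by Möbius transformations; $\mathcal{R}(\gamma;z_q)=2\lambda^2\cosh\rho(z_q,\gamma z_q)$. *)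

theory Defs
  imports "HOL-Analysis.Analysis" "HOL-Computational_Algebra.Polynomial"
begin

type_synonym mat2 = "int \<times> int \<times> int \<times> int"   (* (a,b,c,d) = [[a,b],[c,d]] *)

definition SL2Z :: "mat2 set" where
  "SL2Z = {(a,b,c,d). a*d - b*c = 1}"

definition mneg :: "mat2 \<Rightarrow> mat2" where
  "mneg M = (case M of (a,b,c,d) \<Rightarrow> (-a,-b,-c,-d))"

definition PSL2Z :: "mat2 set set" where
  "PSL2Z = {{M, mneg M} | M. M \<in> SL2Z}"

definition moeb :: "mat2 \<Rightarrow> complex \<Rightarrow> complex" where
  "moeb M z = (case M of (a,b,c,d) \<Rightarrow> (of_int a * z + of_int b) / (of_int c * z + of_int d))"

text \<open>Moebius action of a PSL(2,Z) element (independent of the representative).\<close>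
definition act :: "mat2 set \<Rightarrow> complex \<Rightarrow> complex" where
  "act g z = moeb (SOME M. M \<in> g) z"

definition cosh_rho :: "complex \<Rightarrow> complex \<Rightarrow> real" where
  "cosh_rho z w = 1 + (cmod (z - w))\<^sup>2 / (2 * Im z * Im w)"

definition mu :: "nat \<Rightarrow> real" where
  "mu q = (if q \<in> {4, 8} then 0 else 1/2)"

definition lam :: "nat \<Rightarrow> real" where
  "lam q = sqrt (real q) / 2"

definition zq :: "nat \<Rightarrow> complex" where
  "zq q = Complex (mu q) (lam q)"

definition RR :: "nat \<Rightarrow> mat2 set \<Rightarrow> real" where
  "RR q g = 2 * (lam q)\<^sup>2 * cosh_rho (zq q) (act g (zq q))"

definition stab :: "nat \<Rightarrow> mat2 set set" where
  "stab q = {g \<in> PSL2Z. act g (zq q) = zq q}"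

definition Kfield :: "nat \<Rightarrow> complex set" where
  "Kfield q = {of_real (of_rat r) + of_real (of_rat s) * \<i> * of_real (sqrt (real q)) | r s. True}"

definition algebraic_integer :: "complex \<Rightarrow> bool" where
  "algebraic_integer x \<longleftrightarrow> (\<exists>p :: int poly. lead_coeff p = 1 \<and> poly (map_poly of_int p) x = 0)"

definition OK :: "nat \<Rightarrow> complex set" where
  "OK q = {x \<in> Kfield q. algebraic_integer x}"

definition OK_units :: "nat \<Rightarrow> complex set" where
  "OK_units q = {x \<in> OK q. \<exists>y \<in> OK q. x * y = 1}"

end

theory Submission
  imports Defs
begin


definition cls :: "mat2 \<Rightarrow> mat2 set" where "cls M = {M, mneg M}"
definition mmul :: "mat2 \<Rightarrow> mat2 \<Rightarrow> mat2" where
  "mmul M N = (case M of (a,b,c,d) \<Rightarrow> case N of (e,f,g,h) \<Rightarrow>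
      (a*e+b*g, a*f+b*h, c*e+d*g, c*f+d*h))"
definition minv :: "mat2 \<Rightarrow> mat2" where "minv M = (case M of (a,b,c,d) \<Rightarrow> (d,-b,-c,a))"

lemma mneg_simp[simp]: "mneg (a,b,c,d) = (-a,-b,-c,-d)" by (simp add: mneg_def)
lemma mmul_simp[simp]: "mmul (a,b,c,d) (e,f,g,h) = (a*e+b*g, a*f+b*h, c*e+d*g, c*f+d*h)"
  by (simp add: mmul_def)
lemma minv_simp[simp]: "minv (a,b,c,d) = (d,-b,-c,a)" by (simp add: minv_def)
lemma moeb_simp[simp]: "moeb (a,b,c,d) z = (of_int a * z + of_int b) / (of_int c * z + of_int d)"
  by (simp add: moeb_def)
lemma SL2Z_simp[simp]: "(a,b,c,d) \<in> SL2Z \<longleftrightarrow> a*d - b*c = 1" by (simp add: SL2Z_def)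

lemma mneg_mneg[simp]: "mneg (mneg M) = M" by (cases M) auto
lemma mmul_mneg: "mmul M (mneg N) = mneg (mmul M N)"
proof -
  obtain a b c d where M: "M = (a,b,c,d)" by (cases M) auto
  obtain e f g h where N: "N = (e,f,g,h)" by (cases N) auto
  show ?thesis by (simp add: M N)
qed
lemma mmul_assoc: "mmul M (mmul N P) = mmul (mmul M N) P"
proof -
  obtain a b c d where M: "M = (a,b,c,d)" by (cases M) auto
  obtain e f g h where N: "N = (e,f,g,h)" by (cases N) auto
  obtain i j k l where P: "P = (i,j,k,l)" by (cases P) auto
  show ?thesis by (simp add: M N P) (simp add: algebra_simps)
qed
lemma det_mult: "(a*e+b*g)*(c*f+d*h) - (a*f+b*h)*(c*e+d*g) = (a*d-b*c)*(e*h-f*g)" for a b c d e f g h :: int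
  by (simp add: algebra_simps)
lemma mmul_SL: "M \<in> SL2Z \<Longrightarrow> N \<in> SL2Z \<Longrightarrow> mmul M N \<in> SL2Z"
proof -
  assume A: "M \<in> SL2Z" "N \<in> SL2Z"
  obtain a b c d where M: "M = (a,b,c,d)" by (cases M) auto
  obtain e f g h where N: "N = (e,f,g,h)" by (cases N) auto
  show ?thesis using A det_mult[of a e b g c f d h] by (simp add: M N)
qed
lemma minv_SL: "M \<in> SL2Z \<Longrightarrow> minv M \<in> SL2Z"
  by (cases M) (auto simp: algebra_simps)
lemma mmul_minv: "M \<in> SL2Z \<Longrightarrow> mmul M (minv M) = (1,0,0,1)"
  by (cases M) (auto simp: algebra_simps)
lemma mmul_minv2: "M \<in> SL2Z \<Longrightarrow> mmul (minv M) M = (1,0,0,1)"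
  by (cases M) (auto simp: algebra_simps)
lemma mmul_id[simp]: "mmul (1,0,0,1) M = M" by (cases M) auto

lemma moeb_mneg: "moeb (mneg M) z = moeb M z"
proof -
  obtain a b c d where M: "M = (a,b,c,d)" by (cases M) auto
  have 1: "of_int (-a) * z + of_int (-b) = -(of_int a * z + of_int b)" by simp
  have 2: "of_int (-c) * z + of_int (-d) = -(of_int c * z + of_int d)" by simp
  show ?thesis unfolding M mneg_simp moeb_simp 1 2 minus_divide_divide ..
qed

lemma act_cls: "act (cls M) z = moeb M z"
proof -
  have "(SOME N. N \<in> cls M) \<in> cls M" by (rule someI[of _ M]) (simp add: cls_def)
  then show ?thesis unfolding act_def cls_def using moeb_mneg[of M z] by auto
qed

lemma PSL2Z_iff: "g \<in> PSL2Z \<longleftrightarrow> (\<exists>M \<in> SL2Z. g = cls M)"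
  unfolding PSL2Z_def cls_def by blast

lemma denom_nz:
  assumes "Im z > 0" "(a,b,c,d) \<in> SL2Z"
  shows "of_int c * z + of_int d \<noteq> 0"
proof
  assume h: "of_int c * z + of_int d = 0"
  then have "Im (of_int c * z + of_int d) = 0" by simp
  then have "c = 0" using assms by simp
  then have "d = 0" using h by simp
  then show False using assms \<open>c = 0\<close> by simp
qed

lemma Im_moeb_pos:
  assumes "Im z > 0" "(a,b,c,d) \<in> SL2Z"
  shows "Im (moeb (a,b,c,d) z) > 0"
proof -
  have nz: "of_int c * z + of_int d \<noteq> 0" using denom_nz assms by blast
  have num: "Im (of_int a * z + of_int b) * Re (of_int c * z + of_int d) - Re (of_int a * z + of_int b) * Im (of_int c * z + of_int d) = Im z"
  proof -
    have "real_of_int (a*d - b*c) = 1" using assms(2) by simp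
    then have d1: "real_of_int a * real_of_int d - real_of_int b * real_of_int c = 1" by simp
    have "Im (of_int a * z + of_int b) * Re (of_int c * z + of_int d) - Re (of_int a * z + of_int b) * Im (of_int c * z + of_int d)
      = (real_of_int a * real_of_int d - real_of_int b * real_of_int c) * Im z" by (simp add: algebra_simps)
    then show ?thesis using d1 by simp
  qed
  have den: "(Re (of_int c * z + of_int d))\<^sup>2 + (Im (of_int c * z + of_int d))\<^sup>2 > 0"
    using nz by (simp add: complex_eq_iff sum_power2_gt_zero_iff)
  show ?thesis unfolding moeb_simp Im_divide num using den assms(1) by simp
qed
lemma moeb_mmul:
  assumes "Im z > 0" "M \<in> SL2Z" "N \<in> SL2Z"
  shows "moeb (mmul M N) z = moeb M (moeb N z)"
proof -
  obtain a b c d where M: "M = (a,b,c,d)" by (cases M) auto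
  obtain e f g h where N: "N = (e,f,g,h)" by (cases N) auto
  have n1: "of_int g * z + of_int h \<noteq> 0" using denom_nz assms N by blast
  have gen: "(x1*(XA/XB)+x2)/(x3*(XA/XB)+x4) = (x1*XA+x2*XB)/(x3*XA+x4*XB)" if "XB \<noteq> 0" for x1 x2 x3 x4 XA XB :: complex
  proof -
    have "x1*(XA/XB)+x2 = (x1*XA+x2*XB)/XB" "x3*(XA/XB)+x4 = (x3*XA+x4*XB)/XB" using that by (auto simp: field_simps)
    then show ?thesis using that by simp
  qed
  have "moeb M (moeb N z) = (of_int a*(of_int e*z+ of_int f)+ of_int b*(of_int g*z+ of_int h))/(of_int c*(of_int e*z+ of_int f)+ of_int d*(of_int g*z+ of_int h))"
    using gen[OF n1] by (simp add: M N)
  also have "\<dots> = (of_int (a*e+b*g)*z + of_int (a*f+b*h)) / (of_int (c*e+d*g)*z + of_int (c*f+d*h))"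
  proof -
    have 1: "of_int a*(of_int e*z+ of_int f)+ of_int b*(of_int g*z+ of_int h) = of_int (a*e+b*g)*z + of_int (a*f+b*h)"
      by (simp add: algebra_simps)
    have 2: "of_int c*(of_int e*z+ of_int f)+ of_int d*(of_int g*z+ of_int h) = of_int (c*e+d*g)*z + of_int (c*f+d*h)"
      by (simp add: algebra_simps)
    show ?thesis unfolding 1 2 ..
  qed
  also have "\<dots> = moeb (mmul M N) z" by (simp add: M N)
  finally show ?thesis by simp
qed



lemma phi_closed:
  assumes l: "l > 0" and y: "Im w > 0"
  shows "complex_of_real (2*l^2 * (1 + (cmod (Complex m l - w))^2/(2*Im (Complex m l)*Im w)) + 2*l^2)
       * (\<i>*(w - Complex m l)/(w - cnj (Complex m l)))
     = Complex (2*(Re w - m)*l^2/Im w) (l*((Re w - m)^2 + (Im w)^2 - l^2)/Im w)"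
proof -
  obtain x y where w: "w = Complex x y" by (cases w) auto
  have y0: "y > 0" using y w by simp
  define D where "D = w - cnj (Complex m l)"
  have D: "D = Complex (x - m) (y + l)" by (simp add: D_def w complex_eq_iff)
  have cD: "(cmod D)^2 = (x-m)^2 + (y+l)^2" by (simp add: D cmod_power2)
  have Dnz: "(cmod D)^2 > 0" unfolding cD using y0 l by (simp add: sum_power2_gt_zero_iff)
  have cz: "(cmod (Complex m l - w))^2 = (m-x)^2 + (l-y)^2" by (simp add: w cmod_power2)
  have A: "2*l^2 * (1 + (cmod (Complex m l - w))^2/(2*Im (Complex m l)*Im w)) + 2*l^2 = (l/y) * (cmod D)^2"
    unfolding cz cD using y0 l by (simp add: w field_simps power2_eq_square)
  have f: "\<i>*(w - Complex m l)/D = \<i>*(w - Complex m l) * cnj D / complex_of_real ((cmod D)^2)"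
    by (rule complex_div_cnj)
  have "complex_of_real ((l/y) * (cmod D)^2) * (\<i>*(w - Complex m l)/D)
      = complex_of_real (l/y) * (\<i>*(w - Complex m l) * cnj D)"
  proof -
    have gen: "b \<noteq> 0 \<Longrightarrow> complex_of_real (a*b) * (X / complex_of_real b) = complex_of_real a * X" for a b X
      by (simp add: field_simps)
    show ?thesis unfolding f using gen[of "(cmod D)^2" "l/y"] Dnz by simp
  qed
  also have "\<dots> = Complex (2*(x - m)*l^2/y) (l*((x - m)^2 + y^2 - l^2)/y)"
    by (simp add: D w complex_eq_iff field_simps power2_eq_square)
  finally show ?thesis unfolding A D_def[symmetric] by (simp add: w)
qed

lemma phi_inj:
  assumes l: "l > 0" and y1: "y1 > 0" and y2: "y2 > 0"
    and eq: "Complex (2*u1*l^2/y1) (l*(u1^2 + y1^2 - l^2)/y1) = Complex (2*u2*l^2/y2) (l*(u2^2 + y2^2 - l^2)/y2)"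
  shows "u1 = u2 \<and> y1 = y2"
proof -
  have e1: "2*u1*l^2/y1 = 2*u2*l^2/y2" and e2: "l*(u1^2 + y1^2 - l^2)/y1 = l*(u2^2 + y2^2 - l^2)/y2"
    using eq by auto
  define P where "P = u1/y1"
  have u1: "u1 = P*y1" using y1 by (simp add: P_def)
  have u2: "u2 = P*y2" using e1 y1 y2 l by (simp add: P_def field_simps)
  have "l*((u1^2 + y1^2 - l^2)/y1) = l*((u2^2 + y2^2 - l^2)/y2)" using e2 by (simp only: times_divide_eq_right)
  then have "(u1^2 + y1^2 - l^2)/y1 = (u2^2 + y2^2 - l^2)/y2"
    using mult_left_cancel[of l "(u1^2 + y1^2 - l^2)/y1" "(u2^2 + y2^2 - l^2)/y2"] l by linarith
  then have "y2*(u1^2 + y1^2 - l^2) = y1*(u2^2 + y2^2 - l^2)" using y1 y2 by (simp add: field_simps)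
  then have "(y1 - y2) * ((P^2+1)*y1*y2 + l^2) = 0" unfolding u1 u2 by (simp add: algebra_simps power2_eq_square)
  moreover have "(P^2+1)*y1*y2 + l^2 > 0"
  proof -
    have p: "P^2 + 1 > 0" by (smt (verit) zero_le_power2)
    have "(P^2+1)*y1*y2 > 0" using p y1 y2 by simp
    moreover have "l^2 > 0" using l by simp
    ultimately show ?thesis by linarith
  qed
  ultimately have "y1 = y2" by simp
  then show ?thesis using u1 u2 by simp
qed



lemma fix_iff:
  assumes l: "l > 0" and M: "(a,b,c,d) \<in> SL2Z"
  shows "moeb (a,b,c,d) (Complex m l) = Complex m l \<longleftrightarrow>
    (real_of_int a = 2 * real_of_int c * m + real_of_int d \<and> real_of_int a * m + real_of_int b = real_of_int c * (m^2 - l^2) + real_of_int d * m)"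
proof -
  have nz: "of_int c * Complex m l + of_int d \<noteq> 0" using denom_nz[of "Complex m l" a b c d] l M by simp
  have "moeb (a,b,c,d) (Complex m l) = Complex m l \<longleftrightarrow>
      of_int a * Complex m l + of_int b = Complex m l * (of_int c * Complex m l + of_int d)"
    using nz by (simp add: divide_eq_eq mult.commute)
  also have "\<dots> \<longleftrightarrow> (real_of_int a * m + real_of_int b = real_of_int c * (m^2 - l^2) + real_of_int d * m \<and> real_of_int a*l = 2 * real_of_int c*m*l + real_of_int d*l)"
    by (simp add: complex_eq_iff algebra_simps power2_eq_square)
  also have "real_of_int a*l = 2 * real_of_int c*m*l + real_of_int d*l \<longleftrightarrow> real_of_int a = 2 * real_of_int c*m + real_of_int d"
  proof -
    have "real_of_int a*l = 2 * real_of_int c*m*l + real_of_int d*l \<longleftrightarrow> real_of_int a*l = (2 * real_of_int c*m + real_of_int d)*l" by (simp add: algebra_simps)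
    also have "\<dots> \<longleftrightarrow> real_of_int a = 2 * real_of_int c*m + real_of_int d" using l by simp
    finally show ?thesis .
  qed
  finally show ?thesis by auto
qed

lemma fix_odd:
  assumes l: "l > 0" "l^2 = real q / 4" and M: "(a,b,c,d) \<in> SL2Z"
  shows "moeb (a,b,c,d) (Complex (1/2) l) = Complex (1/2) l \<longleftrightarrow> (a = c + d \<and> 4*b = -c*(1 + int q))"
proof -
  have "moeb (a,b,c,d) (Complex (1/2) l) = Complex (1/2) l \<longleftrightarrow>
     (real_of_int a = real_of_int c + real_of_int d \<and> a/2 + b = c*(1/4 - real q/4) + d/2)"
  proof -
    have L: "(1/2::real)^2 - l^2 = 1/4 - real q/4" using l(2) by (simp add: power2_eq_square)
    show ?thesis using fix_iff[OF l(1) M, of "1/2"] unfolding L by simp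
  qed
  also have "\<dots> \<longleftrightarrow> (real_of_int a = real_of_int (c + d) \<and> real_of_int (4*b) = real_of_int (-c*(1 + int q)))"
    by (auto simp: field_simps)
  also have "\<dots> \<longleftrightarrow> (a = c + d \<and> 4*b = -c*(1 + int q))" by (simp only: of_int_eq_iff)
  finally show ?thesis .
qed

lemma fix_even:
  assumes l: "l > 0" "l^2 = real q / 4" and M: "(a,b,c,d) \<in> SL2Z"
  shows "moeb (a,b,c,d) (Complex 0 l) = Complex 0 l \<longleftrightarrow> (a = d \<and> 4*b = -c * int q)"
proof -
  have "moeb (a,b,c,d) (Complex 0 l) = Complex 0 l \<longleftrightarrow>
     (real_of_int a = real_of_int d \<and> b = c*(- real q/4))"
  proof -
    have L: "(0::real)^2 - l^2 = - real q/4" using l(2) by (simp add: power2_eq_square)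
    show ?thesis using fix_iff[OF l(1) M, of 0] unfolding L by simp
  qed
  also have "\<dots> \<longleftrightarrow> (real_of_int a = real_of_int d \<and> real_of_int (4*b) = real_of_int (-c* int q))"
    by (auto simp: field_simps)
  also have "\<dots> \<longleftrightarrow> (a = d \<and> 4*b = -c * int q)" by (simp only: of_int_eq_iff)
  finally show ?thesis .
qed

lemma int_bound: "(x::int)^2 \<le> n^2 \<Longrightarrow> 0 \<le> n \<Longrightarrow> -n \<le> x \<and> x \<le> n"
  using power2_le_iff_abs_le by fastforce

lemma cls_mneg[simp]: "cls (mneg M) = cls M" by (auto simp: cls_def)

lemma stab_image: "stab q = cls ` {M \<in> SL2Z. moeb M (zq q) = zq q}"
  unfolding stab_def using act_cls PSL2Z_iff by auto

definition FixM :: "nat \<Rightarrow> mat2 set" where "FixM q = {M \<in> SL2Z. moeb M (zq q) = zq q}"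

lemma lam_pos: "q > 0 \<Longrightarrow> lam q > 0" by (simp add: lam_def)
lemma lam_sq: "(lam q)^2 = real q / 4" by (simp add: lam_def power_divide)

lemma FixM_odd:
  assumes "q \<notin> {4,8}" "q > 0"
  shows "FixM q = {(a,b,c,d). a*d - b*c = 1 \<and> a = c + d \<and> 4*b = -c*(1 + int q)}"
proof -
  have z: "zq q = Complex (1/2) (lam q)" using assms by (simp add: zq_def mu_def)
  show ?thesis unfolding FixM_def z
  proof (rule set_eqI)
    fix M :: mat2
    obtain a b c d where M: "M = (a,b,c,d)" by (cases M) auto
    show "M \<in> {M \<in> SL2Z. moeb M (Complex (1 / 2) (lam q)) = Complex (1 / 2) (lam q)} \<longleftrightarrow>
      M \<in> {(a,b,c,d). a*d - b*c = 1 \<and> a = c + d \<and> 4*b = -c*(1 + int q)}"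
      unfolding M using fix_odd[OF lam_pos[OF assms(2)] lam_sq, of a b c d] by (cases "a*d - b*c = 1") auto
  qed
qed

lemma FixM_even:
  assumes "q \<in> {4,8}"
  shows "FixM q = {(a,b,c,d). a*d - b*c = 1 \<and> a = d \<and> 4*b = -c*int q}"
proof -
  have q: "q > 0" using assms by auto
  have z: "zq q = Complex 0 (lam q)" using assms by (auto simp: zq_def mu_def)
  show ?thesis unfolding FixM_def z
  proof (rule set_eqI)
    fix M :: mat2
    obtain a b c d where M: "M = (a,b,c,d)" by (cases M) auto
    show "M \<in> {M \<in> SL2Z. moeb M (Complex 0 (lam q)) = Complex 0 (lam q)} \<longleftrightarrow>
      M \<in> {(a,b,c,d). a*d - b*c = 1 \<and> a = d \<and> 4*b = -c*int q}"
      unfolding M using fix_even[OF lam_pos[OF q] lam_sq, of a b c d] by (cases "a*d - b*c = 1") auto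
  qed
qed

lemma t1: "c = -1 \<or> c = 0 \<or> c = 1 \<Longrightarrow> d = -1 \<or> d = 0 \<or> d = 1 \<Longrightarrow> (2*d + c)^2 + 3*c^2 = (4::int) \<Longrightarrow>
   (c+d, -c, c, d) \<in> {(1,0,0,1), (-1,0,0,-1), (1,-1,1,0), (-1,1,-1,0), (0,-1,1,-1), (0,1,-1,1)}"
  apply (elim disjE) apply simp_all done
lemma t2: "(a,b,c,d) \<in> {(1,0,0,1), (-1,0,0,-1), (1,-1,1,0), (-1,1,-1,0), (0,-1,1,-1), (0,1,-1,1)} \<Longrightarrow> a*d - b*c = 1 \<and> a = c + d \<and> 4*b = -c*(4::int)"
  apply (simp only: insert_iff empty_iff prod.inject) apply (elim disjE conjE) apply simp_all done
lemma t3: "c = -1 \<or> c = 0 \<or> c = 1 \<Longrightarrow> d = -1 \<or> d = 0 \<or> d = 1 \<Longrightarrow> d^2 + c^2 = (1::int) \<Longrightarrow>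
   (d, -c, c, d) \<in> {(1,0,0,1), (-1,0,0,-1), (0,-1,1,0), (0,1,-1,0)}"
  apply (elim disjE) apply simp_all done
lemma t4: "(a,b,c,d) \<in> {(1,0,0,1), (-1,0,0,-1), (0,-1,1,0), (0,1,-1,0)} \<Longrightarrow> a*d - b*c = 1 \<and> a = d \<and> 4*b = -c*(4::int)"
  apply (simp only: insert_iff empty_iff prod.inject) apply (elim disjE conjE) apply simp_all done
lemma t5: "(a,b,c,d) \<in> {(1,0,0,1), (-1,0,0,-1)} \<Longrightarrow> a*d - b*c = 1 \<and> a = d \<and> 4*b = -c*(8::int)"
  apply (simp only: insert_iff empty_iff prod.inject) apply (elim disjE conjE) apply simp_all done
lemma t6: "(a,b,c,d) \<in> {(1,0,0,1), (-1,0,0,-1)} \<Longrightarrow> a*d - b*c = 1 \<and> a = c + d \<and> 4*b = -c*(1 + int q)"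
  apply (simp only: insert_iff empty_iff prod.inject) apply (elim disjE conjE) apply simp_all done

lemma FixM_3: "FixM 3 = {(1,0,0,1), mneg (1,0,0,1), (1,-1,1,0), mneg (1,-1,1,0), (0,-1,1,-1), mneg (0,-1,1,-1)}"
proof -
  have "(a*d - b*c = 1 \<and> a = c + d \<and> 4*b = -c*4) \<longleftrightarrow>
     (a,b,c,d) \<in> {(1,0,0,1), (-1,0,0,-1), (1,-1,1,0), (-1,1,-1,0), (0,-1,1,-1), (0,1,-1,1)}" for a b c d :: int
  proof
    assume h: "a*d - b*c = 1 \<and> a = c + d \<and> 4*b = -c*4"
    then have b: "b = -c" and a: "a = c + d" by auto
    have e0: "(c+d)*d + c*c = 1" using h unfolding a b by simp
    have "(2*d + c)^2 + 3*c^2 = 4*((c+d)*d + c*c)" by (simp add: algebra_simps power2_eq_square)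
    then have e: "(2*d + c)^2 + 3*c^2 = 4" using e0 by simp
    have p: "0 \<le> (2*d+c)^2" "0 \<le> c^2" by simp_all
    have "c^2 < 2" using e p by linarith
    then have "c^2 \<le> 1^2" by simp
    then have c: "-1 \<le> c \<and> c \<le> 1" using int_bound[of c 1] by simp
    have "(2*d+c)^2 \<le> 4" using e p by linarith
    then have "-2 \<le> 2*d+c \<and> 2*d+c \<le> 2" using int_bound[of "2*d+c" 2] by (simp only: power2_eq_square)
    then have d: "-1 \<le> d \<and> d \<le> 1" using c by linarith
    have cs: "c = -1 \<or> c = 0 \<or> c = 1" using c by linarith
    have ds: "d = -1 \<or> d = 0 \<or> d = 1" using d by linarith
    show "(a,b,c,d) \<in> {(1,0,0,1), (-1,0,0,-1), (1,-1,1,0), (-1,1,-1,0), (0,-1,1,-1), (0,1,-1,1)}"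
      unfolding a b by (rule t1[OF cs ds e])
  next
    assume "(a,b,c,d) \<in> {(1,0,0,1), (-1,0,0,-1), (1,-1,1,0), (-1,1,-1,0), (0,-1,1,-1), (0,1,-1,1)}"
    then show "a*d - b*c = 1 \<and> a = c + d \<and> 4*b = -c*4" by (rule t2)
  qed
  note key = this
  have F: "FixM 3 = {(a,b,c,d). a*d - b*c = 1 \<and> a = c + d \<and> 4*b = -c*(1 + int 3)}"
    by (rule FixM_odd) auto
  show ?thesis unfolding F
  proof (rule set_eqI)
    fix M :: mat2
    obtain a b c d where M: "M = (a,b,c,d)" by (cases M) auto
    show "M \<in> {(a,b,c,d). a*d - b*c = 1 \<and> a = c + d \<and> 4*b = -c*(1 + int 3)} \<longleftrightarrow> M \<in> {(1,0,0,1), mneg (1,0,0,1), (1,-1,1,0), mneg (1,-1,1,0), (0,-1,1,-1), mneg (0,-1,1,-1)}"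
      unfolding M using key[of a d b c] by simp
  qed
qed

lemma FixM_4: "FixM 4 = {(1,0,0,1), mneg (1,0,0,1), (0,-1,1,0), mneg (0,-1,1,0)}"
proof -
  have "(a*d - b*c = 1 \<and> a = d \<and> 4*b = -c*4) \<longleftrightarrow>
     (a,b,c,d) \<in> {(1,0,0,1), (-1,0,0,-1), (0,-1,1,0), (0,1,-1,0)}" for a b c d :: int
  proof
    assume h: "a*d - b*c = 1 \<and> a = d \<and> 4*b = -c*4"
    then have b: "b = -c" and a: "a = d" by auto
    have e0: "d*d + c*c = 1" using h unfolding a b by simp
    then have e: "d^2 + c^2 = 1" by (simp add: power2_eq_square)
    have p: "0 \<le> d^2" "0 \<le> c^2" by simp_all
    have "c^2 \<le> 1" using e p by linarith
    then have c: "-1 \<le> c \<and> c \<le> 1" using int_bound[of c 1] by simp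
    have "d^2 \<le> 1" using e p by linarith
    then have d: "-1 \<le> d \<and> d \<le> 1" using int_bound[of d 1] by simp
    have cs: "c = -1 \<or> c = 0 \<or> c = 1" using c by linarith
    have ds: "d = -1 \<or> d = 0 \<or> d = 1" using d by linarith
    show "(a,b,c,d) \<in> {(1,0,0,1), (-1,0,0,-1), (0,-1,1,0), (0,1,-1,0)}"
      unfolding a b by (rule t3[OF cs ds e])
  next
    assume "(a,b,c,d) \<in> {(1,0,0,1), (-1,0,0,-1), (0,-1,1,0), (0,1,-1,0)}"
    then show "a*d - b*c = 1 \<and> a = d \<and> 4*b = -c*4" by (rule t4)
  qed
  note key = this
  have F: "FixM 4 = {(a,b,c,d). a*d - b*c = 1 \<and> a = d \<and> 4*b = -c*int 4}"
    by (rule FixM_even) auto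
  show ?thesis unfolding F
  proof (rule set_eqI)
    fix M :: mat2
    obtain a b c d where M: "M = (a,b,c,d)" by (cases M) auto
    show "M \<in> {(a,b,c,d). a*d - b*c = 1 \<and> a = d \<and> 4*b = -c*int 4} \<longleftrightarrow> M \<in> {(1,0,0,1), mneg (1,0,0,1), (0,-1,1,0), mneg (0,-1,1,0)}"
      unfolding M using key[of a d b c] by simp
  qed
qed

lemma FixM_8: "FixM 8 = {(1,0,0,1), mneg (1,0,0,1)}"
proof -
  have "(a*d - b*c = 1 \<and> a = d \<and> 4*b = -c*8) \<longleftrightarrow>
     (a,b,c,d) \<in> {(1,0,0,1), (-1,0,0,-1)}" for a b c d :: int
  proof
    assume h: "a*d - b*c = 1 \<and> a = d \<and> 4*b = -c*8"
    then have b: "b = -2*c" and a: "a = d" by auto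
    have e0: "d*d + 2*(c*c) = 1" using h unfolding a b by simp
    then have e: "d^2 + 2*c^2 = 1" by (simp add: power2_eq_square)
    have p: "0 \<le> d^2" "0 \<le> c^2" by simp_all
    have "c^2 \<le> 0" using e p by linarith
    then have c: "c = 0" by simp
    then have "d = 1 \<or> d = -1" using e by (simp add: power2_eq_1_iff)
    then show "(a,b,c,d) \<in> {(1,0,0,1), (-1,0,0,-1)}" using c unfolding a b by auto
  next
    assume "(a,b,c,d) \<in> {(1,0,0,1), (-1,0,0,-1)}"
    then show "a*d - b*c = 1 \<and> a = d \<and> 4*b = -c*8" by (rule t5)
  qed
  note key = this
  have F: "FixM 8 = {(a,b,c,d). a*d - b*c = 1 \<and> a = d \<and> 4*b = -c*int 8}"
    by (rule FixM_even) auto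
  show ?thesis unfolding F
  proof (rule set_eqI)
    fix M :: mat2
    obtain a b c d where M: "M = (a,b,c,d)" by (cases M) auto
    show "M \<in> {(a,b,c,d). a*d - b*c = 1 \<and> a = d \<and> 4*b = -c*int 8} \<longleftrightarrow> M \<in> {(1,0,0,1), mneg (1,0,0,1)}"
      unfolding M using key[of a d b c] by simp
  qed
qed

lemma FixM_big:
  assumes "q \<notin> {4,8}" "q \<ge> 7"
  shows "FixM q = {(1,0,0,1), mneg (1,0,0,1)}"
proof -
  have "(a*d - b*c = 1 \<and> a = c + d \<and> 4*b = -c*(1 + int q)) \<longleftrightarrow>
     (a,b,c,d) \<in> {(1,0,0,1), (-1,0,0,-1)}" for a b c d :: int
  proof
    assume h: "a*d - b*c = 1 \<and> a = c + d \<and> 4*b = -c*(1 + int q)"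
    then have a: "a = c + d" and b4: "4*b = -c*(1 + int q)" by auto
    have "a*d - b*c = 1" using h by blast
    then have d1: "(c+d)*d - b*c = 1" by (simp add: a)
    have "4*((c+d)*d - b*c) = 4*(c+d)*d - (4*b)*c" by (simp add: algebra_simps)
    then have x1: "4*(c+d)*d - (4*b)*c = 4" using d1 by simp
    have "(4*b)*c = -c*(1 + int q)*c" using b4 by simp
    then have e0: "4*(c+d)*d + c*(1 + int q)*c = 4" using x1 by simp
    have "(2*d + c)^2 + int q * c^2 = 4*(c+d)*d + c*(1 + int q)*c" by (simp add: algebra_simps power2_eq_square)
    then have e: "(2*d + c)^2 + int q * c^2 = 4" using e0 by simp
    have "c = 0"
    proof (rule ccontr)
      assume "c \<noteq> 0"
      then have "c^2 > 0" by simp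
      then have c1: "c^2 \<ge> 1" by linarith
      have q7: "int q \<ge> 7" using assms(2) by simp
      have "7*1 \<le> int q * c^2" using mult_mono[OF q7 c1] by simp
      moreover have "0 \<le> (2*d + c)^2" by simp
      ultimately show False using e by linarith
    qed
    then have "d^2 = 1" using e by (simp add: power2_eq_square)
    then have "d = 1 \<or> d = -1" by (simp add: power2_eq_1_iff)
    moreover have "b = 0" using b4 \<open>c = 0\<close> by simp
    ultimately show "(a,b,c,d) \<in> {(1,0,0,1), (-1,0,0,-1)}" using \<open>c = 0\<close> a by auto
  next
    assume "(a,b,c,d) \<in> {(1,0,0,1), (-1,0,0,-1)}"
    then show "a*d - b*c = 1 \<and> a = c + d \<and> 4*b = -c*(1 + int q)" by (rule t6)
  qed
  note key = this
  have F: "FixM q = {(a,b,c,d). a*d - b*c = 1 \<and> a = c + d \<and> 4*b = -c*(1 + int q)}"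
    by (rule FixM_odd) (use assms in auto)
  show ?thesis unfolding F
  proof (rule set_eqI)
    fix M :: mat2
    obtain a b c d where M: "M = (a,b,c,d)" by (cases M) auto
    show "M \<in> {(a,b,c,d). a*d - b*c = 1 \<and> a = c + d \<and> 4*b = -c*(1 + int q)} \<longleftrightarrow> M \<in> {(1,0,0,1), mneg (1,0,0,1)}"
      unfolding M using key[of a d b c] by simp
  qed
qed



definition Lat :: "nat \<Rightarrow> int \<Rightarrow> complex set" where
  "Lat q D = {(of_int a + of_int b * (\<i> * of_real (sqrt (real q)))) / of_int D | a b. True}"

lemma LatI: "x = (of_int a + of_int b * (\<i> * of_real (sqrt (real q)))) / of_int D \<Longrightarrow> x \<in> Lat q D"
  unfolding Lat_def by blast

lemma LatE: assumes "x \<in> Lat q D"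
  obtains a b where "x = (of_int a + of_int b * (\<i> * of_real (sqrt (real q)))) / of_int D"
  using assms unfolding Lat_def by blast

lemma lat_zero: "0 \<in> Lat q D" by (rule LatI[of _ 0 0]) simp

lemma lat_add: assumes "x \<in> Lat q D" "y \<in> Lat q D" shows "x + y \<in> Lat q D"
proof -
  obtain a b where x: "x = (of_int a + of_int b * (\<i> * of_real (sqrt (real q)))) / of_int D" using assms(1) by (rule LatE)
  obtain a' b' where y: "y = (of_int a' + of_int b' * (\<i> * of_real (sqrt (real q)))) / of_int D" using assms(2) by (rule LatE)
  show ?thesis
  proof (rule LatI[of _ "a+a'" "b+b'"])
    show "x + y = (of_int (a+a') + of_int (b+b') * (\<i> * of_real (sqrt (real q)))) / of_int D"
      unfolding x y add_divide_distrib[symmetric] by (simp add: algebra_simps)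
  qed
qed

lemma lat_smult: assumes "x \<in> Lat q D" shows "of_int k * x \<in> Lat q D"
proof -
  obtain a b where x: "x = (of_int a + of_int b * (\<i> * of_real (sqrt (real q)))) / of_int D" using assms(1) by (rule LatE)
  show ?thesis
  proof (rule LatI[of _ "k*a" "k*b"])
    show "of_int k * x = (of_int (k*a) + of_int (k*b) * (\<i> * of_real (sqrt (real q)))) / of_int D"
      unfolding x times_divide_eq_right by (simp add: algebra_simps)
  qed
qed

lemma lat_neg: assumes "x \<in> Lat q D" shows "- x \<in> Lat q D"
  using lat_smult[OF assms, of "-1"] by simp

lemma lat_sum: "(\<And>i. i \<in> A \<Longrightarrow> f i \<in> Lat q D) \<Longrightarrow> sum f A \<in> Lat q D"
proof (induction A rule: infinite_finite_induct)
  case (infinite A) then show ?case by (simp add: lat_zero)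
next
  case empty then show ?case by (simp add: lat_zero)
next
  case (insert x F) then show ?case by (simp add: lat_add)
qed

lemma lat_mono: assumes "x \<in> Lat q D" "E \<noteq> 0" shows "x \<in> Lat q (D*E)"
proof -
  obtain a b where x: "x = (of_int a + of_int b * (\<i> * of_real (sqrt (real q)))) / of_int D" using assms(1) by (rule LatE)
  show ?thesis
  proof (rule LatI[of _ "a*E" "b*E"])
    have "(of_int (a*E) + of_int (b*E) * (\<i> * of_real (sqrt (real q)))) / of_int (D*E)
       = ((of_int a + of_int b * (\<i> * of_real (sqrt (real q)))) * of_int E) / (of_int D * of_int E)"
      by (simp add: algebra_simps)
    also have "\<dots> = x" unfolding x using assms(2) by simp
    finally show "x = (of_int (a*E) + of_int (b*E) * (\<i> * of_real (sqrt (real q)))) / of_int (D*E)" by simp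
  qed
qed

lemma cmod_lat_num:
  "(cmod (of_int a + of_int b * (\<i> * of_real (sqrt (real q)))))^2 = (real_of_int a)^2 + real q * (real_of_int b)^2"
  by (simp add: cmod_power2 power_mult_distrib)

lemma lat_norm: assumes "x \<in> Lat q D" "x \<noteq> 0" "q > 0" "D > 0" shows "cmod x \<ge> 1 / of_int D"
proof -
  obtain a b where x: "x = (of_int a + of_int b * (\<i> * of_real (sqrt (real q)))) / of_int D" using assms(1) by (rule LatE)
  define A where "A = of_int a + of_int b * (\<i> * of_real (sqrt (real q)))"
  have "A \<noteq> 0" using assms(2) x A_def by auto
  then have ab: "a \<noteq> 0 \<or> b \<noteq> 0" unfolding A_def by auto
  have "(real_of_int a)^2 + real q * (real_of_int b)^2 \<ge> 1"
  proof (cases "a = 0")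
    case True
    then have "b \<noteq> 0" using ab by simp
    then have "b^2 > 0" by simp
    then have "b^2 \<ge> 1" by linarith
    then have "(real_of_int b)^2 \<ge> 1" by (metis of_int_1_le_iff of_int_power)
    moreover have "real q \<ge> 1" using assms(3) by simp
    ultimately have "real q * (real_of_int b)^2 \<ge> 1 * 1" by (intro mult_mono) auto
    then show ?thesis using zero_le_power2[of "real_of_int a"] by linarith
  next
    case False
    then have "a^2 > 0" by simp
    then have "a^2 \<ge> 1" by linarith
    then have "(real_of_int a)^2 \<ge> 1" by (metis of_int_1_le_iff of_int_power)
    moreover have "real q * (real_of_int b)^2 \<ge> 0" by simp
    ultimately show ?thesis by linarith
  qed
  then have "(cmod A)^2 \<ge> 1" unfolding A_def cmod_lat_num .
  then have "\<bar>1\<bar> \<le> \<bar>cmod A\<bar>" using abs_le_square_iff[of 1 "cmod A"] by simp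
  then have "cmod A \<ge> 1" by simp
  moreover have "cmod x = cmod A / of_int D" unfolding x A_def using assms(4) by (simp add: norm_divide)
  ultimately show ?thesis using assms(4) by (simp add: divide_right_mono)
qed

lemma lat_real: assumes "x \<in> Lat q D" "Im x = 0" "q > 0" "D > 0" shows "\<exists>a. x = of_int a / of_int D"
proof -
  obtain a b where x: "x = (of_int a + of_int b * (\<i> * of_real (sqrt (real q)))) / of_int D" using assms(1) by (rule LatE)
  have "Im x = real_of_int b * sqrt (real q) / real_of_int D" unfolding x by simp
  then have "b = 0" using assms by simp
  then show ?thesis using x by auto
qed



abbreviation W :: "nat \<Rightarrow> complex" where "W q \<equiv> \<i> * of_real (sqrt (real q))"

lemma W_sq: "W q * W q = - of_nat q"
proof -
  have "complex_of_real (sqrt (real q)) * complex_of_real (sqrt (real q)) = complex_of_real (sqrt (real q) * sqrt (real q))"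
    by (simp only: of_real_mult)
  also have "\<dots> = complex_of_real (real q)" by simp
  also have "\<dots> = of_nat q" by simp
  finally have h: "complex_of_real (sqrt (real q)) * complex_of_real (sqrt (real q)) = of_nat q" .
  have "W q * W q = (\<i> * \<i>) * (complex_of_real (sqrt (real q)) * complex_of_real (sqrt (real q)))"
    by (simp only: mult_ac)
  then show ?thesis unfolding h by simp
qed

lemma Kfield_iff: "x \<in> Kfield q \<longleftrightarrow> (\<exists>r s. x = of_real (of_rat r) + of_real (of_rat s) * W q)"
  unfolding Kfield_def mem_Collect_eq mult.assoc by blast

lemma K_mult: assumes "x \<in> Kfield q" "y \<in> Kfield q" shows "x * y \<in> Kfield q"
proof -
  obtain r1 s1 where x: "x = of_real (of_rat r1) + of_real (of_rat s1) * W q" using assms(1) Kfield_iff by blast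
  obtain r2 s2 where y: "y = of_real (of_rat r2) + of_real (of_rat s2) * W q" using assms(2) Kfield_iff by blast
  have "x * y = of_real (of_rat r1) * of_real (of_rat r2) + of_real (of_rat s1) * of_real (of_rat s2) * (W q * W q)
     + (of_real (of_rat r1) * of_real (of_rat s2) + of_real (of_rat r2) * of_real (of_rat s1)) * W q"
    unfolding x y by (simp add: algebra_simps)
  also have "\<dots> = of_real (of_rat (r1*r2 - of_nat q * s1 * s2)) + of_real (of_rat (r1* s2 + r2* s1)) * W q"
    unfolding W_sq by (simp add: of_rat_mult of_rat_diff of_rat_add algebra_simps)
  finally show ?thesis unfolding Kfield_iff by blast
qed

lemma K_one: "1 \<in> Kfield q"
  unfolding Kfield_iff by (rule exI[of _ 1], rule exI[of _ 0]) simp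

lemma K_pow: "x \<in> Kfield q \<Longrightarrow> x^k \<in> Kfield q"
  by (induction k) (auto simp: K_one K_mult)

lemma K_lat: assumes "x \<in> Kfield q" shows "\<exists>D>0. x \<in> Lat q D"
proof -
  obtain r s where x: "x = of_real (of_rat r) + of_real (of_rat s) * W q" using assms Kfield_iff by blast
  obtain a1 b1 where r: "quotient_of r = (a1, b1)" by (cases "quotient_of r") auto
  obtain a2 b2 where s: "quotient_of s = (a2, b2)" by (cases "quotient_of s") auto
  have b1: "b1 > 0" using quotient_of_denom_pos[OF r] .
  have b2: "b2 > 0" using quotient_of_denom_pos[OF s] .
  have r': "of_real (of_rat r) = (of_int a1 / of_int b1 :: complex)"
    using quotient_of_div[OF r] by (simp add: of_rat_divide)
  have s': "of_real (of_rat s) = (of_int a2 / of_int b2 :: complex)"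
    using quotient_of_div[OF s] by (simp add: of_rat_divide)
  have "x = (of_int (a1*b2) + of_int (a2*b1) * W q) / of_int (b1*b2)"
    unfolding x r' s' using b1 b2 by (simp add: field_simps)
  then have "x \<in> Lat q (b1*b2)" by (rule LatI)
  moreover have "b1*b2 > 0" using b1 b2 by simp
  ultimately show ?thesis by blast
qed

lemma pows_lat: assumes "x \<in> Kfield q" shows "\<exists>D>0. \<forall>i<m. x^i \<in> Lat q D"
proof (induction m)
  case 0 then show ?case by (rule exI[of _ 1]) simp
next
  case (Suc m)
  then obtain D where D: "D > 0" "\<forall>i<m. x^i \<in> Lat q D" by blast
  obtain E where E: "E > 0" "x^m \<in> Lat q E" using K_lat[OF K_pow[OF assms]] by blast
  have "\<forall>i<Suc m. x^i \<in> Lat q (D*E)"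
  proof (intro allI impI)
    fix i assume "i < Suc m"
    then consider "i < m" | "i = m" by linarith
    then show "x^i \<in> Lat q (D*E)"
    proof cases
      case 1 then show ?thesis using D E lat_mono by simp
    next
      case 2 then show ?thesis using lat_mono[OF E(2), of D] D by (simp add: mult.commute)
    qed
  qed
  moreover have "D*E > 0" using D E by simp
  ultimately show ?case by blast
qed

lemma OK_pows_lat: assumes "x \<in> OK q" shows "\<exists>D>0. \<forall>k. x^k \<in> Lat q D"
proof -
  have xK: "x \<in> Kfield q" using assms unfolding OK_def by simp
  obtain p :: "int poly" where p1: "lead_coeff p = 1" and p0: "poly (map_poly of_int p) x = 0"
    using assms unfolding OK_def algebraic_integer_def by blast
  define n where "n = degree p"
  define P where "P = (map_poly of_int p :: complex poly)"
  have degP: "degree P = n" unfolding P_def n_def by (rule degree_map_poly) simp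
  have cP: "coeff P i = of_int (coeff p i)" for i unfolding P_def by (rule coeff_map_poly) simp
  have "0 = (\<Sum>i\<le>n. coeff P i * x^i)" using p0 unfolding P_def[symmetric] poly_altdef degP by simp
  also have "\<dots> = (\<Sum>i<n. coeff P i * x^i) + x^n"
    using p1 unfolding n_def[symmetric] by (simp add: lessThan_Suc_atMost[symmetric] cP)
  finally have xn: "x^n = - (\<Sum>i<n. of_int (coeff p i) * x^i)" unfolding cP by (simp add: eq_neg_iff_add_eq_0 add.commute)
  obtain D where D: "D > 0" "\<forall>i<n. x^i \<in> Lat q D" using pows_lat[OF xK] by blast
  have "x^k \<in> Lat q D" for k
  proof (induction k rule: less_induct)
    case (less k)
    show ?case
    proof (cases "k < n")
      case True then show ?thesis using D by simp
    next
      case False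
      then have "x^k = x^(k-n) * x^n" by (simp add: power_add[symmetric])
      also have "\<dots> = - (\<Sum>i<n. of_int (coeff p i) * x^(k-n+i))"
        unfolding xn by (simp add: sum_distrib_left power_add algebra_simps)
      finally have xk: "x^k = - (\<Sum>i<n. of_int (coeff p i) * x^(k-n+i))" .
      have "n > 0"
      proof (rule ccontr)
        assume "\<not> n > 0"
        then have "n = 0" by simp
        then have "x^0 = 0" using xn by simp
        then show False by simp
      qed
      have "(\<Sum>i<n. of_int (coeff p i) * x^(k-n+i)) \<in> Lat q D"
      proof (rule lat_sum)
        fix i assume "i \<in> {..<n}"
        then have "k-n+i < k" using False \<open>n > 0\<close> by auto
        then show "of_int (coeff p i) * x^(k-n+i) \<in> Lat q D" using less lat_smult by blast
      qed
      then show ?thesis unfolding xk by (rule lat_neg)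
    qed
  qed
  then show ?thesis using D by blast
qed



lemma norm_ge1:
  assumes "q > 0" "D > 0" "\<forall>k. x^k \<in> Lat q D" "x \<noteq> 0"
  shows "cmod x \<ge> 1"
proof (rule ccontr)
  assume "\<not> cmod x \<ge> 1"
  then have "cmod x < 1" by simp
  moreover have "1 / real_of_int D > 0" using assms(2) by simp
  ultimately obtain k where k: "(cmod x)^k < 1 / real_of_int D" using real_arch_pow_inv by blast
  have "cmod (x^k) \<ge> 1 / real_of_int D" using lat_norm[of "x^k" q D] assms by simp
  then show False using k by (simp add: norm_power)
qed

lemma rat_int:
  fixes u :: rat
  assumes D: "D > 0" and h: "\<forall>k. \<exists>a. u^k * of_int D = of_int a"
  shows "\<exists>n. u = of_int n"
proof -
  obtain a b where qu: "quotient_of u = (a, b)" by (cases "quotient_of u") auto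
  have b0: "b > 0" using quotient_of_denom_pos[OF qu] .
  have cop: "coprime a b" using quotient_of_coprime[OF qu] .
  have u: "u = of_int a / of_int b" using quotient_of_div[OF qu] .
  have dvd: "b^k dvd D" for k
  proof -
    obtain c where c: "u^k * of_int D = of_int c" using h by blast
    then have "(of_int a)^k * of_int D = of_int c * (of_int b :: rat)^k"
      unfolding u using b0 by (simp add: power_divide field_simps)
    then have "a^k * D = c * b^k" by (metis of_int_eq_iff of_int_mult of_int_power)
    then have "b^k dvd a^k * D" by simp
    moreover have "coprime (b^k) (a^k)" using cop by (simp add: coprime_commute)
    ultimately show ?thesis using coprime_dvd_mult_right_iff by blast
  qed
  have "b = 1"
  proof (rule ccontr)
    assume "b \<noteq> 1"
    then have b2: "b \<ge> 2" using b0 by simp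
    have "b^(nat D) dvd D" by (rule dvd)
    then have le: "b^(nat D) \<le> D" using D by (simp add: zdvd_imp_le)
    have "2^(nat D) \<le> b^(nat D)" using b2 by (simp add: power_mono)
    moreover have "int (nat D) < 2^(nat D)" by (metis of_nat_less_two_power)
    ultimately show False using le D by simp
  qed
  then show ?thesis using u by auto
qed

lemma unit_props:
  assumes q: "q > 0" and x: "x \<in> OK_units q"
  shows "cmod x = 1 \<and> (\<exists>n. 2 * Re x = of_int n)"
proof -
  obtain y where y: "y \<in> OK q" "x * y = 1" and xO: "x \<in> OK q" using x unfolding OK_units_def by blast
  obtain D1 where D1: "D1 > 0" "\<forall>k. x^k \<in> Lat q D1" using OK_pows_lat[OF xO] by blast
  obtain D2 where D2: "D2 > 0" "\<forall>k. y^k \<in> Lat q D2" using OK_pows_lat[OF y(1)] by blast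
  define D where "D = D1 * D2"
  have D: "D > 0" using D1 D2 D_def by simp
  have xL: "x^k \<in> Lat q D" for k using lat_mono[of "x^k" q D1 D2] D1 D2 D_def by simp
  have yL: "y^k \<in> Lat q D" for k using lat_mono[of "y^k" q D2 D1] D1 D2 D_def by (simp add: mult.commute)
  have x0: "x \<noteq> 0" and y0: "y \<noteq> 0" using y(2) by auto
  have n1: "cmod x \<ge> 1" using norm_ge1[OF q D _ x0] xL by blast
  have n2: "cmod y \<ge> 1" using norm_ge1[OF q D _ y0] yL by blast
  have "cmod x * cmod y = 1" using y(2) by (metis norm_mult norm_one)
  then have cx: "cmod x = 1" using n1 n2
    by (smt (verit, ccfv_threshold) mult_le_cancel_left1 mult_right_mono)
  have "x * cnj x = of_real ((cmod x)^2)" by (rule complex_norm_square[symmetric, THEN trans]) (simp add: complex_mult_cnj)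
  then have "x * cnj x = 1" using cx by simp
  then have yc: "y = cnj x" using y(2) x0 by (metis mult_left_cancel)
  define t where "t = x + y"
  have t: "t = of_real (2 * Re x)" unfolding t_def yc by (simp add: complex_add_cnj)
  have tp: "t^k * x^j \<in> Lat q D \<and> t^k * y^j \<in> Lat q D" for k j
  proof (induction k arbitrary: j)
    case 0 then show ?case using xL yL by simp
  next
    case (Suc k)
    have a1: "t^Suc k * x^j = t^k * x^(Suc j) + t^k * (y * x^j)" unfolding t_def by (simp add: algebra_simps)
    have a2: "t^Suc k * y^j = t^k * (x * y^j) + t^k * y^(Suc j)" unfolding t_def by (simp add: algebra_simps)
    have yx: "t^k * (y * x^j) \<in> Lat q D"
    proof (cases j)
      case 0 then show ?thesis using Suc.IH[of 1] by simp
    next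
      case (Suc j')
      have "y * x^j = x^j'" unfolding Suc using y(2) by (simp add: mult.assoc[symmetric] mult.commute)
      then show ?thesis using Suc.IH[of j'] by simp
    qed
    have xy: "t^k * (x * y^j) \<in> Lat q D"
    proof (cases j)
      case 0 then show ?thesis using Suc.IH[of 1] by simp
    next
      case (Suc j')
      have "x * y^j = y^j'" unfolding Suc using y(2) by (simp add: mult.assoc[symmetric])
      then show ?thesis using Suc.IH[of j'] by simp
    qed
    show ?case unfolding a1 a2 using Suc.IH[of "Suc j"] yx xy lat_add by blast
  qed
  have "\<exists>a. t^k = of_int a / of_int D" for k
  proof -
    have "t^k \<in> Lat q D" using tp[of k 0] by simp
    moreover have "Im (t^k) = 0" unfolding t by (simp flip: of_real_power)
    ultimately show ?thesis using lat_real q D by blast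
  qed
  then have "\<forall>k. \<exists>a. (2 * Re x)^k * real_of_int D = real_of_int a"
  proof (intro allI)
    fix k
    obtain a where "t^k = of_int a / of_int D" using \<open>\<And>k. \<exists>a. t^k = of_int a / of_int D\<close> by blast
    then have "of_real ((2 * Re x)^k) = (of_int a / of_int D :: complex)" unfolding t by (simp add: of_real_power)
    then have "(2 * Re x)^k = real_of_int a / real_of_int D" by (metis of_real_eq_iff of_real_divide of_real_of_int_eq)
    then show "\<exists>a. (2 * Re x)^k * real_of_int D = real_of_int a" using D by (intro exI[of _ a]) simp
  qed
  note rx = this
  have "x \<in> Kfield q" using xO unfolding OK_def by simp
  then obtain r s where xrs: "x = of_real (of_rat r) + of_real (of_rat s) * W q" using Kfield_iff by blast
  have Rex: "Re x = of_rat r" unfolding xrs by simp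
  have "\<forall>k. \<exists>a. (2 * r)^k * of_int D = of_int a"
  proof
    fix k
    obtain a where "(2 * Re x)^k * real_of_int D = real_of_int a" using rx by blast
    then have "of_rat ((2 * r)^k * of_int D) = (of_rat (of_int a) :: real)"
      unfolding Rex by (simp add: of_rat_mult of_rat_power)
    then show "\<exists>a. (2 * r)^k * of_int D = of_int a" by (intro exI[of _ a]) (simp only: of_rat_eq_iff)
  qed
  then obtain n where "2 * r = of_int n" using rat_int[OF D] by blast
  then have "2 * Re x = of_int n" unfolding Rex by (metis of_rat_mult of_rat_numeral_eq of_rat_of_int_eq)
  then show ?thesis using cx by blast
qed



lemma rat_sq_int:
  fixes v :: rat
  assumes "v^2 = of_int m"
  shows "\<exists>c. v = of_int c"
proof -
  obtain a b where qu: "quotient_of v = (a, b)" by (cases "quotient_of v") auto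
  have b0: "b > 0" using quotient_of_denom_pos[OF qu] .
  have cop: "coprime a b" using quotient_of_coprime[OF qu] .
  have v: "v = of_int a / of_int b" using quotient_of_div[OF qu] .
  have "(of_int a)^2 = of_int m * (of_int b :: rat)^2" using assms unfolding v using b0 by (simp add: power_divide field_simps)
  then have "of_int (a^2) = (of_int (m * b^2) :: rat)" by simp
  then have "a^2 = m * b^2" by (simp only: of_int_eq_iff)
  then have "b dvd a^2" by (simp add: power2_eq_square)
  moreover have "coprime b (a^2)" using cop by (simp add: coprime_commute)
  ultimately have "b dvd 1" by (metis coprime_dvd_mult_right_iff mult.right_neutral)
  then have "b = 1" using b0 by simp
  then show ?thesis using v by auto
qed

lemma nonsq: "0 \<le> k \<Longrightarrow> k^2 < m \<Longrightarrow> m < (k+1)^2 \<Longrightarrow> (c::int)^2 \<noteq> m"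
proof
  assume k: "0 \<le> k" "k^2 < m" "m < (k+1)^2" and c: "c^2 = m"
  have "\<not> \<bar>c\<bar> \<le> \<bar>k\<bar>" using abs_le_square_iff[of c k] c k by simp
  moreover have "\<not> \<bar>k+1\<bar> \<le> \<bar>c\<bar>" using abs_le_square_iff[of "k+1" c] c k by simp
  ultimately show False using k by linarith
qed

definition allowed :: "nat \<Rightarrow> (rat \<times> rat) set" where
  "allowed q = {(1,0), (-1,0)} \<union> (if q = 4 then {(0,1/2), (0,-1/2)} else {})
     \<union> (if q = 3 then {(1/2,1/2), (1/2,-1/2), (-1/2,1/2), (-1/2,-1/2)} else {})"

lemma enum_rs:
  fixes r s :: rat
  assumes q: "q \<in> {3, 4, 7, 8, 11, 19, 43, 67, 163}" and n: "2 * r = of_int n" and e: "r^2 + of_nat q * s^2 = 1"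
  shows "(r, s) \<in> allowed q"
proof -
  have r: "r = of_int n / 2" using n by simp
  have qs: "of_nat q * s^2 \<ge> 0" by simp
  have "of_int (n^2) = 4 * r^2" unfolding r by (simp add: power_divide)
  also have "\<dots> \<le> 4" using e qs by linarith
  finally have "of_int (n^2) \<le> (of_int 4 :: rat)" by simp
  then have "n^2 \<le> 4" by (simp only: of_int_le_iff)
  then have nb: "-2 \<le> n \<and> n \<le> 2" using power2_le_iff_abs_le[of 2 n] by (simp add: abs_le_iff)
  then consider "n = -2" | "n = 2" | "n = 0" | "n = 1" | "n = -1" by linarith
  then show ?thesis
  proof cases
    case 1
    then have "r = -1" using r by simp
    then have "of_nat q * s^2 = 0" using e by simp
    then have "s = 0" using q by auto
    then show ?thesis using \<open>r = -1\<close> by (simp add: allowed_def)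
  next
    case 2
    then have "r = 1" using r by simp
    then have "of_nat q * s^2 = 0" using e by simp
    then have "s = 0" using q by auto
    then show ?thesis using \<open>r = 1\<close> by (simp add: allowed_def)
  next
    case 3
    then have r0: "r = 0" using r by simp
    then have qs1: "of_nat q * s^2 = 1" using e by simp
    have "(of_nat q * s)^2 = of_nat q * (of_nat q * s^2)" by algebra
    also have "\<dots> = of_nat q * 1" by (simp only: qs1)
    also have "\<dots> = of_int (int q)" by simp
    finally have v2: "(of_nat q * s)^2 = of_int (int q)" .
    obtain c where c: "of_nat q * s = of_int c" using rat_sq_int[OF v2] by blast
    have "of_int (c^2) = (of_int (int q) :: rat)" using v2 unfolding c by simp
    then have c2: "c^2 = int q" by (simp only: of_int_eq_iff)
    have "q = 4"
    proof (rule ccontr)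
      assume "q \<noteq> 4"
      then have "q \<in> {3, 7, 8, 11, 19, 43, 67, 163}" using q by simp
      then show False
      proof (elim insertE)
        show "q = 3 \<Longrightarrow> False" using c2 nonsq[of 1 3 c] by simp
        show "q = 7 \<Longrightarrow> False" using c2 nonsq[of 2 7 c] by simp
        show "q = 8 \<Longrightarrow> False" using c2 nonsq[of 2 8 c] by simp
        show "q = 11 \<Longrightarrow> False" using c2 nonsq[of 3 11 c] by simp
        show "q = 19 \<Longrightarrow> False" using c2 nonsq[of 4 19 c] by simp
        show "q = 43 \<Longrightarrow> False" using c2 nonsq[of 6 43 c] by simp
        show "q = 67 \<Longrightarrow> False" using c2 nonsq[of 8 67 c] by simp
        show "q = 163 \<Longrightarrow> False" using c2 nonsq[of 12 163 c] by simp
        show "q \<in> {} \<Longrightarrow> False" by simp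
      qed
    qed
    have "4 * s^2 = 1" using qs1 \<open>q = 4\<close> by simp
    then have "s^2 = 1/4" by linarith
    then have "s^2 = (1/2)^2" by (simp add: power_divide)
    then have "s = 1/2 \<or> s = - (1/2)" by (rule power2_eq_iff[THEN iffD1])
    then show ?thesis using r0 \<open>q = 4\<close> by (auto simp: allowed_def)
  next
    case 4
    then have r0: "r = 1/2" using r by simp
    have "r^2 = 1/4" unfolding r0 by (simp add: power_divide)
    then have qs1: "of_nat q * s^2 = 3/4" using e by linarith
    have "(2 * of_nat q * s)^2 = 4 * of_nat q * (of_nat q * s^2)" by algebra
    also have "\<dots> = 4 * of_nat q * (3/4)" by (simp only: qs1)
    also have "\<dots> = of_int (3 * int q)" by simp
    finally have v2: "(2 * of_nat q * s)^2 = of_int (3 * int q)" .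
    obtain c where c: "2 * of_nat q * s = of_int c" using rat_sq_int[OF v2] by blast
    have "of_int (c^2) = (of_int (3 * int q) :: rat)" using v2 unfolding c by simp
    then have c2: "c^2 = 3 * int q" by (simp only: of_int_eq_iff)
    have "q = 3"
    proof (rule ccontr)
      assume "q \<noteq> 3"
      then have "q \<in> {4, 7, 8, 11, 19, 43, 67, 163}" using q by simp
      then show False
      proof (elim insertE)
        show "q = 4 \<Longrightarrow> False" using c2 nonsq[of 3 12 c] by simp
        show "q = 7 \<Longrightarrow> False" using c2 nonsq[of 4 21 c] by simp
        show "q = 8 \<Longrightarrow> False" using c2 nonsq[of 4 24 c] by simp
        show "q = 11 \<Longrightarrow> False" using c2 nonsq[of 5 33 c] by simp
        show "q = 19 \<Longrightarrow> False" using c2 nonsq[of 7 57 c] by simp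
        show "q = 43 \<Longrightarrow> False" using c2 nonsq[of 11 129 c] by simp
        show "q = 67 \<Longrightarrow> False" using c2 nonsq[of 14 201 c] by simp
        show "q = 163 \<Longrightarrow> False" using c2 nonsq[of 22 489 c] by simp
        show "q \<in> {} \<Longrightarrow> False" by simp
      qed
    qed
    have "3 * s^2 = 3/4" using qs1 \<open>q = 3\<close> by simp
    then have "s^2 = 1/4" by linarith
    then have "s^2 = (1/2)^2" by (simp add: power_divide)
    then have "s = 1/2 \<or> s = - (1/2)" by (rule power2_eq_iff[THEN iffD1])
    then show ?thesis using r0 \<open>q = 3\<close> by (auto simp: allowed_def)
  next
    case 5
    then have r0: "r = -1/2" using r by simp
    have "r^2 = 1/4" unfolding r0 by (simp add: power_divide)
    then have qs1: "of_nat q * s^2 = 3/4" using e by linarith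
    have "(2 * of_nat q * s)^2 = 4 * of_nat q * (of_nat q * s^2)" by algebra
    also have "\<dots> = 4 * of_nat q * (3/4)" by (simp only: qs1)
    also have "\<dots> = of_int (3 * int q)" by simp
    finally have v2: "(2 * of_nat q * s)^2 = of_int (3 * int q)" .
    obtain c where c: "2 * of_nat q * s = of_int c" using rat_sq_int[OF v2] by blast
    have "of_int (c^2) = (of_int (3 * int q) :: rat)" using v2 unfolding c by simp
    then have c2: "c^2 = 3 * int q" by (simp only: of_int_eq_iff)
    have "q = 3"
    proof (rule ccontr)
      assume "q \<noteq> 3"
      then have "q \<in> {4, 7, 8, 11, 19, 43, 67, 163}" using q by simp
      then show False
      proof (elim insertE)
        show "q = 4 \<Longrightarrow> False" using c2 nonsq[of 3 12 c] by simp
        show "q = 7 \<Longrightarrow> False" using c2 nonsq[of 4 21 c] by simp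
        show "q = 8 \<Longrightarrow> False" using c2 nonsq[of 4 24 c] by simp
        show "q = 11 \<Longrightarrow> False" using c2 nonsq[of 5 33 c] by simp
        show "q = 19 \<Longrightarrow> False" using c2 nonsq[of 7 57 c] by simp
        show "q = 43 \<Longrightarrow> False" using c2 nonsq[of 11 129 c] by simp
        show "q = 67 \<Longrightarrow> False" using c2 nonsq[of 14 201 c] by simp
        show "q = 163 \<Longrightarrow> False" using c2 nonsq[of 22 489 c] by simp
        show "q \<in> {} \<Longrightarrow> False" by simp
      qed
    qed
    have "3 * s^2 = 3/4" using qs1 \<open>q = 3\<close> by simp
    then have "s^2 = 1/4" by linarith
    then have "s^2 = (1/2)^2" by (simp add: power_divide)
    then have "s = 1/2 \<or> s = - (1/2)" by (rule power2_eq_iff[THEN iffD1])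
    then show ?thesis using r0 \<open>q = 3\<close> by (auto simp: allowed_def)
  qed
qed



definition emb :: "nat \<Rightarrow> rat \<times> rat \<Rightarrow> complex" where
  "emb q rs = of_real (of_rat (fst rs)) + of_real (of_rat (snd rs)) * W q"

lemma Re_emb: "Re (emb q (r,s)) = of_rat r" by (simp add: emb_def)
lemma Im_emb: "Im (emb q (r,s)) = of_rat s * sqrt (real q)" by (simp add: emb_def)

lemma emb_inj: "q > 0 \<Longrightarrow> inj (emb q)"
proof (rule injI)
  fix a b assume q: "q > 0" and e: "emb q a = emb q b"
  obtain r s where a: "a = (r,s)" by (cases a) auto
  obtain r' s' where b: "b = (r',s')" by (cases b) auto
  have "of_rat r = (of_rat r' :: real)" using arg_cong[OF e, of Re] unfolding a b Re_emb .
  then have "r = r'" by simp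
  have "of_rat s * sqrt (real q) = of_rat s' * sqrt (real q)" using arg_cong[OF e, of Im] unfolding a b Im_emb .
  then have "of_rat s = (of_rat s' :: real)" using q by simp
  then have "s = s'" by simp
  show "a = b" using a b \<open>r = r'\<close> \<open>s = s'\<close> by simp
qed

lemma emb_mult_conj: "emb q (r,s) * emb q (r,-s) = of_real (of_rat (r^2 + of_nat q * s^2))"
proof -
  have "emb q (r,s) * emb q (r,-s) = of_real (of_rat r) * of_real (of_rat r) - of_real (of_rat s) * of_real (of_rat s) * (W q * W q)"
    unfolding emb_def by (simp add: algebra_simps of_rat_minus)
  also have "\<dots> = of_real (of_rat (r^2 + of_nat q * s^2))"
    unfolding W_sq by (simp add: of_rat_add of_rat_mult power2_eq_square)
  finally show ?thesis .
qed

lemma emb_K: "emb q rs \<in> Kfield q"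
  unfolding Kfield_iff emb_def by blast

lemma emb_algint:
  assumes n: "2 * r = of_int n" and e: "r^2 + of_nat q * s^2 = 1"
  shows "algebraic_integer (emb q (r,s))"
proof -
  define x where "x = emb q (r,s)"
  have "x * x = of_real (of_rat r) * of_real (of_rat r) + of_real (of_rat s) * of_real (of_rat s) * (W q * W q)
     + 2 * of_real (of_rat r) * of_real (of_rat s) * W q"
    unfolding x_def emb_def by (simp add: algebra_simps)
  also have "\<dots> = of_real (of_rat (r^2 - of_nat q * s^2)) + 2 * of_real (of_rat r) * of_real (of_rat s) * W q"
    unfolding W_sq by (simp add: of_rat_diff of_rat_mult power2_eq_square)
  finally have xx: "x * x = of_real (of_rat (r^2 - of_nat q * s^2)) + 2 * of_real (of_rat r) * of_real (of_rat s) * W q" .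
  have nx: "of_int n * x = 2 * of_real (of_rat r) * x"
  proof -
    have "(of_int n :: complex) = of_real (of_rat (of_int n))" by simp
    also have "\<dots> = of_real (of_rat (2 * r))" unfolding n ..
    also have "\<dots> = 2 * of_real (of_rat r)" by (simp add: of_rat_mult)
    finally show ?thesis by simp
  qed
  have "1 - of_int n * x + x * x = 0"
  proof -
    have "1 - of_int n * x + x * x = 1 - 2 * of_real (of_rat r) * x + x * x" unfolding nx ..
    also have "\<dots> = 1 - 2 * of_real (of_rat r) * of_real (of_rat r) + of_real (of_rat (r^2 - of_nat q * s^2))"
      unfolding xx unfolding x_def emb_def by (simp add: algebra_simps)
    also have "\<dots> = of_real (of_rat (1 - 2 * r * r + (r^2 - of_nat q * s^2)))"
      by (simp add: of_rat_diff of_rat_mult of_rat_add)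
    also have "1 - 2 * r * r + (r^2 - of_nat q * s^2) = 0" using e by (simp add: power2_eq_square algebra_simps)
    finally show ?thesis by simp
  qed
  moreover have "poly (map_poly of_int [:1, -n, 1:]) x = 1 - of_int n * x + x * x"
    by (simp add: map_poly_pCons algebra_simps)
  moreover have "lead_coeff [:1, -n, 1:] = 1" by simp
  ultimately show ?thesis unfolding algebraic_integer_def x_def by metis
qed

lemma allowed_props:
  assumes "rs \<in> allowed q" "q \<in> {3, 4, 7, 8, 11, 19, 43, 67, 163}"
  shows "2 * fst rs = of_int \<lfloor>2 * fst rs\<rfloor> \<and> (fst rs)^2 + of_nat q * (snd rs)^2 = 1 \<and> (fst rs, - snd rs) \<in> allowed q"
proof -
  consider "rs = (1,0)" | "rs = (-1,0)" | "q = 4" "rs = (0,1/2)" | "q = 4" "rs = (0,-1/2)"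
    | "q = 3" "rs = (1/2,1/2)" | "q = 3" "rs = (1/2,-1/2)" | "q = 3" "rs = (-1/2,1/2)" | "q = 3" "rs = (-1/2,-1/2)"
    using assms(1) unfolding allowed_def by (auto split: if_splits)
  then show ?thesis using assms(2) by cases (simp_all add: allowed_def power2_eq_square)
qed



lemma OK_units_eq:
  assumes q: "q \<in> {3, 4, 7, 8, 11, 19, 43, 67, 163}"
  shows "OK_units q = emb q ` allowed q"
proof
  have q0: "q > 0" using q by auto
  show "OK_units q \<subseteq> emb q ` allowed q"
  proof
    fix x assume x: "x \<in> OK_units q"
    obtain n where cx: "cmod x = 1" and n: "2 * Re x = of_int n" using unit_props[OF q0 x] by blast
    have "x \<in> Kfield q" using x unfolding OK_units_def OK_def by simp
    then obtain r s where xrs: "x = of_real (of_rat r) + of_real (of_rat s) * W q" using Kfield_iff by blast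
    have xe: "x = emb q (r,s)" unfolding xrs emb_def by simp
    have Rex: "Re x = of_rat r" unfolding xe Re_emb ..
    have Imx: "Im x = of_rat s * sqrt (real q)" unfolding xe Im_emb ..
    have "of_rat (2 * r) = (of_rat (of_int n) :: real)" using n unfolding Rex by (simp add: of_rat_mult)
    then have n': "2 * r = of_int n" by (simp only: of_rat_eq_iff)
    have "(Re x)^2 + (Im x)^2 = 1" using cx cmod_power2[of x] by simp
    then have "of_rat (r^2 + of_nat q * s^2) = (of_rat 1 :: real)"
      unfolding Rex Imx by (simp add: of_rat_add of_rat_mult power2_eq_square algebra_simps)
    then have e: "r^2 + of_nat q * s^2 = 1" by (simp only: of_rat_eq_iff)
    have "(r,s) \<in> allowed q" by (rule enum_rs[OF q n' e])
    then show "x \<in> emb q ` allowed q" using xe by blast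
  qed
next
  show "emb q ` allowed q \<subseteq> OK_units q"
  proof
    fix x assume "x \<in> emb q ` allowed q"
    then obtain r s where rs: "(r,s) \<in> allowed q" and x: "x = emb q (r,s)" by auto
    have p1: "2 * r = of_int \<lfloor>2 * r\<rfloor>" "r^2 + of_nat q * s^2 = 1" "(r,-s) \<in> allowed q"
      using allowed_props[OF rs q] by auto
    have p2: "2 * r = of_int \<lfloor>2 * r\<rfloor>" "r^2 + of_nat q * (-s)^2 = 1"
      using allowed_props[OF p1(3) q] by auto
    have xO: "x \<in> OK q" unfolding OK_def x using emb_K emb_algint[OF p1(1) p1(2)] by blast
    have yO: "emb q (r,-s) \<in> OK q" unfolding OK_def using emb_K emb_algint[OF p2(1) p2(2)] by blast
    have "x * emb q (r,-s) = 1" unfolding x emb_mult_conj p1(2) by simp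
    then show "x \<in> OK_units q" unfolding OK_units_def using xO yO by blast
  qed
qed

lemma card_allowed: "q \<in> {3, 4, 7, 8, 11, 19, 43, 67, 163} \<Longrightarrow>
  finite (allowed q) \<and> card (allowed q) = (if q = 3 then 6 else if q = 4 then 4 else 2)"
  by (auto simp: allowed_def)

lemma OK_units_card: assumes q: "q \<in> {3, 4, 7, 8, 11, 19, 43, 67, 163}"
  shows "finite (OK_units q) \<and> card (OK_units q) = (if q = 3 then 6 else if q = 4 then 4 else 2)"
proof -
  have q0: "q > 0" using q by auto
  have "card (OK_units q) = card (allowed q)" unfolding OK_units_eq[OF q]
    by (rule card_image[OF inj_on_subset[OF emb_inj[OF q0] subset_UNIV]])
  then show ?thesis using card_allowed[OF q] OK_units_eq[OF q] by simp
qed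



lemma cls_neq: "M \<notin> cls N \<Longrightarrow> cls M \<noteq> cls N"
  unfolding cls_def by auto

lemma stab_FixM: "stab q = cls ` FixM q"
  unfolding FixM_def by (rule stab_image)

lemma stab_card: assumes q: "q \<in> {3, 4, 7, 8, 11, 19, 43, 67, 163}"
  shows "finite (stab q) \<and> card (stab q) = (if q = 3 then 3 else if q = 4 then 2 else 1)"
proof -
  consider "q = 3" | "q = 4" | "q = 8" | "q \<notin> {4,8}" "q \<ge> 7" using q by auto
  then show ?thesis
  proof cases
    case 1
    have s: "stab q = {cls (1,0,0,1), cls (1,-1,1,0), cls (0,-1,1,-1)}"
      unfolding stab_FixM 1 FixM_3 by (simp only: image_insert image_empty cls_mneg insert_absorb2)
    have n1: "cls (1,0,0,1) \<noteq> cls (1,-1,1,0)" by (rule cls_neq) (simp add: cls_def)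
    have n2: "cls (1,0,0,1) \<noteq> cls (0,-1,1,-1)" by (rule cls_neq) (simp add: cls_def)
    have n3: "cls (1,-1,1,0) \<noteq> cls (0,-1,1,-1)" by (rule cls_neq) (simp add: cls_def)
    show ?thesis unfolding s using n1 n2 n3 1 by simp
  next
    case 2
    have s: "stab q = {cls (1,0,0,1), cls (0,-1,1,0)}"
      unfolding stab_FixM 2 FixM_4 by (simp only: image_insert image_empty cls_mneg insert_absorb2)
    have n1: "cls (1,0,0,1) \<noteq> cls (0,-1,1,0)" by (rule cls_neq) (simp add: cls_def)
    show ?thesis unfolding s using n1 2 by simp
  next
    case 3
    have s: "stab q = {cls (1,0,0,1)}"
      unfolding stab_FixM 3 FixM_8 by (simp only: image_insert image_empty cls_mneg insert_absorb2)
    show ?thesis unfolding s using 3 by simp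
  next
    case 4
    have s: "stab q = {cls (1,0,0,1)}"
      unfolding stab_FixM FixM_big[OF 4] by (simp only: image_insert image_empty cls_mneg insert_absorb2)
    show ?thesis unfolding s using 4 by auto
  qed
qed

lemma act_Im: assumes "g \<in> PSL2Z" "Im z > 0" shows "Im (act g z) > 0"
proof -
  obtain M where M: "M \<in> SL2Z" "g = cls M" using assms(1) PSL2Z_iff by blast
  obtain a b c d where Md: "M = (a,b,c,d)" by (cases M) auto
  show ?thesis unfolding M(2) act_cls Md using Im_moeb_pos[OF assms(2)] M(1) Md by blast
qed

lemma zq_Im: "q > 0 \<Longrightarrow> Im (zq q) > 0" by (simp add: zq_def lam_def)

lemma Psi_inj:
  assumes q: "q > 0" and w1: "Im w1 > 0" and w2: "Im w2 > 0"
    and e: "complex_of_real (2*(lam q)^2 * cosh_rho (zq q) w1 + 2*(lam q)^2) * (\<i>*(w1 - zq q)/(w1 - cnj (zq q)))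
          = complex_of_real (2*(lam q)^2 * cosh_rho (zq q) w2 + 2*(lam q)^2) * (\<i>*(w2 - zq q)/(w2 - cnj (zq q)))"
  shows "w1 = w2"
proof -
  have z: "zq q = Complex (mu q) (lam q)" by (simp add: zq_def)
  have l: "lam q > 0" using lam_pos[OF q] .
  have e2: "Complex (2*(Re w1 - mu q)*(lam q)^2/Im w1) (lam q*((Re w1 - mu q)^2 + (Im w1)^2 - (lam q)^2)/Im w1)
      = Complex (2*(Re w2 - mu q)*(lam q)^2/Im w2) (lam q*((Re w2 - mu q)^2 + (Im w2)^2 - (lam q)^2)/Im w2)"
    using e unfolding cosh_rho_def z phi_closed[OF l w1] phi_closed[OF l w2] .
  have "Re w1 - mu q = Re w2 - mu q \<and> Im w1 = Im w2" by (rule phi_inj[OF l w1 w2 e2])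
  then show ?thesis by (simp add: complex_eq_iff)
qed

lemma img_cls: "mmul N ` cls M = cls (mmul N M)"
  unfolding cls_def by (simp add: mmul_mneg)

lemma moeb_id: "moeb (1,0,0,1) z = z" by simp

lemma fiber_card:
  assumes q: "q > 0" and g0: "g0 \<in> PSL2Z"
  shows "card {g \<in> PSL2Z. act g (zq q) = act g0 (zq q)} = card (stab q)"
proof -
  let ?z = "zq q"
  have z: "Im ?z > 0" using zq_Im[OF q] .
  obtain M0 where M0: "M0 \<in> SL2Z" "g0 = cls M0" using g0 PSL2Z_iff by blast
  define N0 where "N0 = minv M0"
  have N0: "N0 \<in> SL2Z" unfolding N0_def using minv_SL[OF M0(1)] .
  define A where "A = {g \<in> PSL2Z. act g ?z = act g0 ?z}"
  have "bij_betw (\<lambda>h. mmul N0 ` h) A (stab q)"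
  proof (rule bij_betw_byWitness[where f' = "\<lambda>h. mmul M0 ` h"])
    show "\<forall>a\<in>A. mmul M0 ` mmul N0 ` a = a"
    proof
      fix a assume "a \<in> A"
      then obtain M where M: "M \<in> SL2Z" "a = cls M" unfolding A_def using PSL2Z_iff by blast
      show "mmul M0 ` mmul N0 ` a = a" unfolding M(2) img_cls mmul_assoc N0_def mmul_minv[OF M0(1)] by simp
    qed
    show "\<forall>a'\<in>stab q. mmul N0 ` mmul M0 ` a' = a'"
    proof
      fix a assume "a \<in> stab q"
      then obtain M where M: "M \<in> SL2Z" "a = cls M" unfolding stab_def using PSL2Z_iff by blast
      show "mmul N0 ` mmul M0 ` a = a" unfolding M(2) img_cls mmul_assoc N0_def mmul_minv2[OF M0(1)] by simp
    qed
    show "(\<lambda>h. mmul N0 ` h) ` A \<subseteq> stab q"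
    proof
      fix b assume "b \<in> (\<lambda>h. mmul N0 ` h) ` A"
      then obtain a where a: "a \<in> A" "b = mmul N0 ` a" by blast
      then obtain M where M: "M \<in> SL2Z" "a = cls M" unfolding A_def using PSL2Z_iff by blast
      have eq: "moeb M ?z = moeb M0 ?z" using a(1) unfolding A_def M(2) M0(2) by (simp add: act_cls)
      have b: "b = cls (mmul N0 M)" unfolding a(2) M(2) img_cls ..
      have "moeb (mmul N0 M) ?z = moeb N0 (moeb M ?z)" by (rule moeb_mmul[OF z N0 M(1)])
      also have "\<dots> = moeb N0 (moeb M0 ?z)" unfolding eq ..
      also have "\<dots> = moeb (mmul N0 M0) ?z" by (rule moeb_mmul[OF z N0 M0(1), symmetric])
      also have "\<dots> = ?z" unfolding N0_def mmul_minv2[OF M0(1)] by simp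
      finally have "act b ?z = ?z" unfolding b act_cls .
      moreover have "b \<in> PSL2Z" unfolding b PSL2Z_iff using mmul_SL[OF N0 M(1)] by blast
      ultimately show "b \<in> stab q" unfolding stab_def by simp
    qed
    show "(\<lambda>h. mmul M0 ` h) ` stab q \<subseteq> A"
    proof
      fix b assume "b \<in> (\<lambda>h. mmul M0 ` h) ` stab q"
      then obtain a where a: "a \<in> stab q" "b = mmul M0 ` a" by blast
      then obtain M where M: "M \<in> SL2Z" "a = cls M" unfolding stab_def using PSL2Z_iff by blast
      have eq: "moeb M ?z = ?z" using a(1) unfolding stab_def M(2) by (simp add: act_cls)
      have b: "b = cls (mmul M0 M)" unfolding a(2) M(2) img_cls ..
      have "moeb (mmul M0 M) ?z = moeb M0 (moeb M ?z)" by (rule moeb_mmul[OF z M0(1) M(1)])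
      also have "\<dots> = moeb M0 ?z" unfolding eq ..
      finally have "act b ?z = act g0 ?z" unfolding b M0(2) act_cls .
      moreover have "b \<in> PSL2Z" unfolding b PSL2Z_iff using mmul_SL[OF M0(1) M(1)] by blast
      ultimately show "b \<in> A" unfolding A_def by simp
    qed
  qed
  then show ?thesis unfolding A_def by (rule bij_betw_same_card)
qed

theorem lemma2p3:
  fixes q :: nat
  assumes "q \<in> {3, 4, 7, 8, 11, 19, 43, 67, 163}"
  defines "f \<equiv> (\<lambda>w. \<i> * (w - zq q) / (w - cnj (zq q)))"
  defines "\<phi> \<equiv> (\<lambda>g. complex_of_real (RR q g + 2 * (lam q)\<^sup>2) * f (act g (zq q)))"
  shows "finite (stab q)
    \<and> (\<forall>w \<in> \<phi> ` PSL2Z. card {g \<in> PSL2Z. \<phi> g = w} = card (stab q))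
    \<and> finite (OK_units q) \<and> 2 * card (stab q) = card (OK_units q)"
proof -
  have q0: "q > 0" using assms(1) by auto
  have z: "Im (zq q) > 0" using zq_Im[OF q0] .
  have fib: "card {g \<in> PSL2Z. \<phi> g = w} = card (stab q)" if w: "w \<in> \<phi> ` PSL2Z" for w
  proof -
    obtain g0 where g0: "g0 \<in> PSL2Z" "w = \<phi> g0" using w by blast
    have "{g \<in> PSL2Z. \<phi> g = w} = {g \<in> PSL2Z. act g (zq q) = act g0 (zq q)}"
    proof (rule Collect_cong)
      fix g
      show "(g \<in> PSL2Z \<and> \<phi> g = w) \<longleftrightarrow> (g \<in> PSL2Z \<and> act g (zq q) = act g0 (zq q))"
      proof (cases "g \<in> PSL2Z")
        case True
        have "\<phi> g = w \<longleftrightarrow> act g (zq q) = act g0 (zq q)"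
        proof
          assume "\<phi> g = w"
          then show "act g (zq q) = act g0 (zq q)"
            unfolding g0(2) \<phi>_def f_def RR_def
            using Psi_inj[OF q0 act_Im[OF True z] act_Im[OF g0(1) z]] by simp
        next
          assume "act g (zq q) = act g0 (zq q)"
          then show "\<phi> g = w" unfolding g0(2) \<phi>_def RR_def by simp
        qed
        then show ?thesis using True by simp
      qed simp
    qed
    then show ?thesis using fiber_card[OF q0 g0(1)] by simp
  qed
  show ?thesis using stab_card[OF assms(1)] OK_units_card[OF assms(1)] fib by auto
qed

end
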